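(* Let $\frac12<p_0<p_1\le\infty$, $\frac12\le q_0,q_1\le\infty$ with $\frac1{p_0}-\frac1{p_1}=\frac1{q_0}-\frac1{q_1}=\mu>0$. Let $T$ be a sublinear operator on $\mathbb R$ mapping Schwartz functions to locally integrable functions with $\|Tg\|_{L^{q_j,\infty}}\le K_j\|g\|_{L^{p_j}}$ for $j=0,1$. Then for all $0<\vartheta<1$, $$\|Tg\|_{L^{q(\vartheta),\infty}}\le C K_0^{1-\vartheta}K_1^{\vartheta}\|g\|_{L^{p(\vartheta)}},\quad\frac1{p(\vartheta)}=\frac{1-\vartheta}{p_0}+\frac\vartheta{p_1},\ \frac1{q(\vartheta)}=\frac{1-\vartheta}{q_0}+\frac\vartheta{q_1},$$ where $C$ does not depend on $\vartheta$, $K_0$, $K_1$ or $g$.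
   Context: $L^{q,\infty}$ denotes weak $L^q$ with quasinorm $\sup_{t>0}t^{1/q}f^\star(t)$, $f^\star$ the decreasing rearrangement. *)

theory Defs
  imports "HOL-Analysis.Analysis"
begin

definition schwartz :: "(real \<Rightarrow> complex) \<Rightarrow> bool" where
  "schwartz f \<longleftrightarrow> (\<exists>D :: nat \<Rightarrow> real \<Rightarrow> complex.
      D 0 = f \<and>
      (\<forall>n x. (D n has_vector_derivative D (Suc n) x) (at x)) \<and>
      (\<forall>n k. \<exists>B. \<forall>x. \<bar>x\<bar> ^ k * norm (D n x) \<le> B))"

text \<open>Reciprocal 1/p of an exponent p in (0,\<infinity>], with 1/\<infinity> = 0.\<close>
definition recip :: "ennreal \<Rightarrow> real" where
  "recip p = enn2real (inverse p)"

definition Lp_norm :: "(real \<Rightarrow> complex) \<Rightarrow> ennreal \<Rightarrow> ennreal" where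
  "Lp_norm f p =
     (if p = \<infinity> then Inf {C :: ennreal. AE x in lebesgue. ennreal (norm (f x)) \<le> C}
      else (let I = (\<integral>\<^sup>+ x. ennreal (norm (f x) powr enn2real p) \<partial>lebesgue)
            in if I = \<infinity> then \<infinity> else ennreal (enn2real I powr (1 / enn2real p))))"

definition distrib_fun :: "(real \<Rightarrow> complex) \<Rightarrow> ennreal \<Rightarrow> ennreal" where
  "distrib_fun f s = emeasure lebesgue {x. s < ennreal (norm (f x))}"

definition rearrangement :: "(real \<Rightarrow> complex) \<Rightarrow> real \<Rightarrow> ennreal" where
  "rearrangement f t = Inf {s :: ennreal. distrib_fun f s \<le> ennreal t}"

definition weak_norm :: "(real \<Rightarrow> complex) \<Rightarrow> ennreal \<Rightarrow> ennreal" where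
  "weak_norm f q = (SUP t \<in> {0<..}. ennreal (t powr recip q) * rearrangement f t)"

definition locally_integrable :: "(real \<Rightarrow> complex) \<Rightarrow> bool" where
  "locally_integrable f \<longleftrightarrow> (\<forall>K. compact K \<longrightarrow> set_integrable lebesgue K f)"

definition sublinear_op :: "((real \<Rightarrow> complex) \<Rightarrow> (real \<Rightarrow> complex)) \<Rightarrow> bool" where
  "sublinear_op T \<longleftrightarrow>
     (\<forall>f g. schwartz f \<longrightarrow> schwartz g \<longrightarrow>
        (AE x in lebesgue. norm (T (\<lambda>y. f y + g y) x) \<le> norm (T f x) + norm (T g x))) \<and>
     (\<forall>f c. schwartz f \<longrightarrow>
        (AE x in lebesgue. norm (T (\<lambda>y. c * f y) x) = norm c * norm (T f x)))"

end

theory Submission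
  imports Defs "HOL-Analysis.Analysis"
begin


coinductive smA :: "((real \<Rightarrow> complex) \<Rightarrow> bool) \<Rightarrow> (real \<Rightarrow> complex) \<Rightarrow> bool" for A where
  smI: "A f \<Longrightarrow> (\<And>x. (f has_vector_derivative f' x) (at x)) \<Longrightarrow> smA A f' \<Longrightarrow> smA A f"

definition der :: "((real \<Rightarrow> complex) \<Rightarrow> bool) \<Rightarrow> (real \<Rightarrow> complex) \<Rightarrow> (real \<Rightarrow> complex)" where
  "der A f = (SOME f'. (\<forall>x. (f has_vector_derivative f' x) (at x)) \<and> smA A f')"

lemma smA_D:
  assumes "smA A f"
  shows "A f" "\<And>x. (f has_vector_derivative der A f x) (at x)" "smA A (der A f)"
proof -
  from assms obtain f' where "A f" "\<forall>x. (f has_vector_derivative f' x) (at x)" "smA A f'"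
    by (cases rule: smA.cases) auto
  hence ex: "\<exists>f'. (\<forall>x. (f has_vector_derivative f' x) (at x)) \<and> smA A f'" by blast
  show "A f" by fact
  from someI_ex[OF ex] show "\<And>x. (f has_vector_derivative der A f x) (at x)" "smA A (der A f)"
    unfolding der_def by auto
qed

fun dseq :: "((real \<Rightarrow> complex) \<Rightarrow> bool) \<Rightarrow> (real \<Rightarrow> complex) \<Rightarrow> nat \<Rightarrow> (real \<Rightarrow> complex)" where
  "dseq A f 0 = f" | "dseq A f (Suc n) = der A (dseq A f n)"

lemma dseq_sm: "smA A f \<Longrightarrow> smA A (dseq A f n)"
  by (induction n) (auto dest: smA_D)

definition rapid :: "(real \<Rightarrow> complex) \<Rightarrow> bool" where
  "rapid h \<longleftrightarrow> (\<forall>k::nat. \<exists>B. \<forall>x. \<bar>x\<bar> ^ k * norm (h x) \<le> B)"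

definition bnd :: "(real \<Rightarrow> complex) \<Rightarrow> bool" where
  "bnd h \<longleftrightarrow> (\<exists>B. \<forall>x. norm (h x) \<le> B)"

lemma schwartz_smA: "schwartz f \<Longrightarrow> smA rapid f"
proof -
  assume "schwartz f"
  then obtain D where D: "D 0 = f" "\<And>n x. (D n has_vector_derivative D (Suc n) x) (at x)"
     "\<And>n k. \<exists>B. \<forall>x. \<bar>x\<bar> ^ k * norm (D n x) \<le> B" unfolding schwartz_def by blast
  have "smA rapid (D n)" for n
  proof (coinduction arbitrary: n rule: smA.coinduct)
    case smA
    show ?case using D(2,3) by (auto simp: rapid_def)
  qed
  then show ?thesis using D(1) by metis
qed

lemma smA_schwartz: "smA rapid f \<Longrightarrow> schwartz f"
  unfolding schwartz_def
  apply (rule exI[of _ "dseq rapid f"])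
proof (intro conjI allI)
  assume f: "smA rapid f"
  show "dseq rapid f 0 = f" by simp
  fix n k
  have "rapid (dseq rapid f n)" using smA_D(1)[OF dseq_sm[OF f]] .
  thus "\<exists>B. \<forall>x. \<bar>x\<bar> ^ k * norm (dseq rapid f n x) \<le> B" by (auto simp: rapid_def)
next
  fix n x assume f: "smA rapid f"
  show "(dseq rapid f n has_vector_derivative dseq rapid f (Suc n) x) (at x)"
    using smA_D(2)[OF dseq_sm[OF f]] by simp
qed

lemma rapid_bnd: "rapid h \<Longrightarrow> bnd h"
  unfolding rapid_def bnd_def by (metis mult_1 power_0)

lemma smA_mono: "smA A f \<Longrightarrow> (\<And>h. A h \<Longrightarrow> B h) \<Longrightarrow> smA B f"
proof (coinduction arbitrary: f rule: smA.coinduct)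
  case smA
  then show ?case by (cases rule: smA.cases) auto
qed



definition lsum :: "((real \<Rightarrow> complex) \<times> (real \<Rightarrow> complex)) list \<Rightarrow> real \<Rightarrow> complex" where
  "lsum L x = sum_list (map (\<lambda>(f,h). f x * h x) L)"

lemma lsum_simps[simp]: "lsum [] x = 0" "lsum ((f,h) # L) x = f x * h x + lsum L x"
  by (auto simp: lsum_def)

lemma lsum_append[simp]: "lsum (L @ M) x = lsum L x + lsum M x"
  by (auto simp: lsum_def)

lemma lsum_class:
  assumes "\<And>f h. A f \<Longrightarrow> B h \<Longrightarrow> C (\<lambda>x. f x * h x)" "C (\<lambda>x. 0)"
    "\<And>f g. C f \<Longrightarrow> C g \<Longrightarrow> C (\<lambda>x. f x + g x)"
  shows "(\<forall>(f,h)\<in>set L. smA A f \<and> smA B h) \<Longrightarrow> C (lsum L)"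
proof (induction L)
  case Nil
  then show ?case using assms(2) by (simp add: lsum_def)
next
  case (Cons a L)
  obtain f h where a: "a = (f,h)" by force
  have "C (\<lambda>x. f x * h x)" using Cons.prems a assms(1) smA_D(1) by auto
  moreover have "C (lsum L)" using Cons by auto
  ultimately have "C (\<lambda>x. f x * h x + lsum L x)" using assms(3) by blast
  then show ?case using a by simp
qed

definition lder where
  "lder A B L = concat (map (\<lambda>(f,h). [(der A f, h), (f, der B h)]) L)"

lemma lder_simps[simp]: "lder A B [] = []" "lder A B ((f,h)#L) = (der A f, h) # (f, der B h) # lder A B L"
  by (auto simp: lder_def)

lemma lsum_deriv:
  "(\<forall>(f,h)\<in>set L. smA A f \<and> smA B h) \<Longrightarrow> (lsum L has_vector_derivative lsum (lder A B L) x) (at x)"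
proof (induction L)
  case Nil
  then show ?case by (simp add: lsum_def[abs_def])
next
  case (Cons a L)
  obtain f h where a: "a = (f,h)" by force
  have f: "(f has_vector_derivative der A f x) (at x)" and h: "(h has_vector_derivative der B h x) (at x)"
    using Cons.prems a smA_D(2) by auto
  have "((\<lambda>x. f x * h x + lsum L x) has_vector_derivative
     (f x * der B h x + der A f x * h x) + lsum (lder A B L) x) (at x)"
    using Cons by (intro has_vector_derivative_add has_vector_derivative_mult f h) auto
  then show ?case using a by (simp add: algebra_simps)
qed

lemma lder_ok: "(\<forall>(f,h)\<in>set L. smA A f \<and> smA B h) \<Longrightarrow> (\<forall>(f,h)\<in>set (lder A B L). smA A f \<and> smA B h)"
  by (induction L) (auto dest: smA_D)

lemma smA_lsum:
  assumes "\<And>f h. A f \<Longrightarrow> B h \<Longrightarrow> C (\<lambda>x. f x * h x)" "C (\<lambda>x. 0)"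
    "\<And>f g. C f \<Longrightarrow> C g \<Longrightarrow> C (\<lambda>x. f x + g x)"
  shows "(\<forall>(f,h)\<in>set L. smA A f \<and> smA B h) \<Longrightarrow> smA C (lsum L)"
proof -
  have "smA C F" if "\<exists>L. F = lsum L \<and> (\<forall>(f,h)\<in>set L. smA A f \<and> smA B h)" for F
    using that
  proof (coinduction arbitrary: F rule: smA.coinduct)
    case smA
    then obtain L where L: "F = lsum L" "\<forall>(f,h)\<in>set L. smA A f \<and> smA B h" by blast
    show ?case
      apply (rule exI[of _ "lsum L"], rule exI[of _ "lsum (lder A B L)"])
      using lsum_class[of A B C, OF assms L(2)] lsum_deriv[OF L(2)] lder_ok[OF L(2)] L(1) by blast
  qed
  thus "(\<forall>(f,h)\<in>set L. smA A f \<and> smA B h) \<Longrightarrow> smA C (lsum L)" by blast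
qed

lemma smA_mult:
  assumes "\<And>f h. A f \<Longrightarrow> B h \<Longrightarrow> C (\<lambda>x. f x * h x)" "C (\<lambda>x. 0)"
    "\<And>f g. C f \<Longrightarrow> C g \<Longrightarrow> C (\<lambda>x. f x + g x)"
    and "smA A f" "smA B h"
  shows "smA C (\<lambda>x. f x * h x)"
proof -
  have "smA C (lsum [(f,h)])" using smA_lsum[OF assms(1-3), where L="[(f,h)]"] assms(4,5) by auto
  moreover have "lsum [(f,h)] = (\<lambda>x. f x * h x)" by (rule ext) simp
  ultimately show ?thesis by simp
qed

lemma bnd_mult: "bnd f \<Longrightarrow> bnd h \<Longrightarrow> bnd (\<lambda>x. f x * h x)"
  unfolding bnd_def
proof (elim exE)
  fix B1 B2 assume 1: "\<forall>x. norm (f x) \<le> B1" and 2: "\<forall>x. norm (h x) \<le> B2"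
  show "\<exists>B. \<forall>x. norm (f x * h x) \<le> B"
  proof (rule exI[of _ "B1*B2"], intro allI)
    fix x
    have "norm (f x * h x) = norm (f x) * norm (h x)" by (simp add: norm_mult)
    also have "\<dots> \<le> B1 * B2" using 1 2 by (meson mult_mono norm_ge_zero order.trans)
    finally show "norm (f x * h x) \<le> B1 * B2" .
  qed
qed

lemma bnd_add: "bnd f \<Longrightarrow> bnd h \<Longrightarrow> bnd (\<lambda>x. f x + h x)"
  unfolding bnd_def
proof (elim exE)
  fix B1 B2 assume 1: "\<forall>x. norm (f x) \<le> B1" and 2: "\<forall>x. norm (h x) \<le> B2"
  show "\<exists>B. \<forall>x. norm (f x + h x) \<le> B"
  proof (rule exI[of _ "B1+B2"], intro allI)
    fix x
    have "norm (f x + h x) \<le> norm (f x) + norm (h x)" by (rule norm_triangle_ineq)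
    also have "\<dots> \<le> B1 + B2" using 1 2 by (meson add_mono)
    finally show "norm (f x + h x) \<le> B1 + B2" .
  qed
qed

lemma bnd_0: "bnd (\<lambda>x. 0)" by (auto simp: bnd_def)

lemma rapid_mult: "rapid f \<Longrightarrow> bnd h \<Longrightarrow> rapid (\<lambda>x. f x * h x)"
  unfolding rapid_def
proof (intro allI)
  fix k :: nat
  assume "\<forall>k. \<exists>B. \<forall>x. \<bar>x\<bar> ^ k * norm (f x) \<le> B" "bnd h"
  then obtain B1 B2 where 1: "\<forall>x. \<bar>x\<bar> ^ k * norm (f x) \<le> B1" and 2: "\<forall>x. norm (h x) \<le> B2"
    unfolding bnd_def by blast
  show "\<exists>B. \<forall>x. \<bar>x\<bar> ^ k * norm (f x * h x) \<le> B"
  proof (rule exI[of _ "B1*B2"], intro allI)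
    fix x
    have "\<bar>x\<bar> ^ k * norm (f x * h x) = (\<bar>x\<bar> ^ k * norm (f x)) * norm (h x)" by (simp add: norm_mult)
    also have "\<dots> \<le> B1 * B2" using 1 2
      by (meson mult_mono mult_nonneg_nonneg norm_ge_zero order.trans zero_le_power abs_ge_zero)
    finally show "\<bar>x\<bar> ^ k * norm (f x * h x) \<le> B1 * B2" .
  qed
qed

lemma rapid_add: "rapid f \<Longrightarrow> rapid h \<Longrightarrow> rapid (\<lambda>x. f x + h x)"
  unfolding rapid_def
proof (intro allI)
  fix k :: nat
  assume "\<forall>k. \<exists>B. \<forall>x. \<bar>x\<bar> ^ k * norm (f x) \<le> B" "\<forall>k. \<exists>B. \<forall>x. \<bar>x\<bar> ^ k * norm (h x) \<le> B"
  then obtain B1 B2 where 1: "\<forall>x. \<bar>x\<bar> ^ k * norm (f x) \<le> B1" and 2: "\<forall>x. \<bar>x\<bar> ^ k * norm (h x) \<le> B2"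
    by blast
  show "\<exists>B. \<forall>x. \<bar>x\<bar> ^ k * norm (f x + h x) \<le> B"
  proof (rule exI[of _ "B1+B2"], intro allI)
    fix x
    have "\<bar>x\<bar> ^ k * norm (f x + h x) \<le> \<bar>x\<bar> ^ k * norm (f x) + \<bar>x\<bar> ^ k * norm (h x)"
      by (metis distrib_left mult_left_mono norm_triangle_ineq zero_le_power abs_ge_zero)
    also have "\<dots> \<le> B1 + B2" using 1 2 by (meson add_mono)
    finally show "\<bar>x\<bar> ^ k * norm (f x + h x) \<le> B1 + B2" .
  qed
qed

lemma rapid_0: "rapid (\<lambda>x. 0)" by (auto simp: rapid_def)

lemma sm_rb: "smA rapid f \<Longrightarrow> smA bnd h \<Longrightarrow> smA rapid (\<lambda>x. f x * h x)"
  by (rule smA_mult[of rapid bnd rapid]) (auto intro: rapid_mult rapid_add rapid_0)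

lemma sm_bb: "smA bnd f \<Longrightarrow> smA bnd h \<Longrightarrow> smA bnd (\<lambda>x. f x * h x)"
  by (rule smA_mult[of bnd bnd bnd]) (auto intro: bnd_mult bnd_add bnd_0)

lemma sm_const: "smA bnd (\<lambda>x. c)"
proof -
  have "smA bnd f" if "\<exists>c. f = (\<lambda>x. c)" for f
    using that
  proof (coinduction arbitrary: f rule: smA.coinduct)
    case smA
    then show ?case by (auto simp: bnd_def intro!: exI[of _ "\<lambda>x. 0"])
  qed
  then show ?thesis by blast
qed

lemma sm_bb_add: "smA bnd f \<Longrightarrow> smA bnd h \<Longrightarrow> smA bnd (\<lambda>x. f x + h x)"
proof -
  assume "smA bnd f" "smA bnd h"
  hence "smA bnd (lsum [(f, \<lambda>x. 1), (h, \<lambda>x. 1)])"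
    by (intro smA_lsum[of bnd bnd bnd]) (auto intro: bnd_mult bnd_add bnd_0 sm_const)
  moreover have "lsum [(f, \<lambda>x. 1), (h, \<lambda>x. 1)] = (\<lambda>x. f x + h x)" by (rule ext) simp
  ultimately show ?thesis by simp
qed

lemma sm_cnj:
  assumes "smA A f" "\<And>f. A f \<Longrightarrow> A (\<lambda>x. cnj (f x))"
  shows "smA A (\<lambda>x. cnj (f x))"
proof -
  have "smA A g" if "\<exists>f. g = (\<lambda>x. cnj (f x)) \<and> smA A f" for g
    using that
  proof (coinduction arbitrary: g rule: smA.coinduct)
    case smA
    then obtain f where g: "g = (\<lambda>x. cnj (f x))" "smA A f" by blast
    show ?case
      apply (rule exI[of _ g], rule exI[of _ "\<lambda>x. cnj (der A f x)"])
      using g smA_D[OF g(2)] assms(2) by (auto intro: has_vector_derivative_cnj)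
  qed
  then show ?thesis using assms(1) by blast
qed

lemma sm_pow: "smA bnd f \<Longrightarrow> smA bnd (\<lambda>x. f x ^ n)"
  by (induction n) (auto intro: sm_bb sm_const)



lemma inv_deriv:
  fixes w :: "real \<Rightarrow> complex"
  assumes "(w has_vector_derivative w') (at x)" "w x \<noteq> 0"
  shows "((\<lambda>x. inverse (w x)) has_vector_derivative (- (inverse (w x) * w' * inverse (w x)))) (at x)"
  using Deriv.has_derivative_inverse[OF assms(2) assms(1)[unfolded has_vector_derivative_def]]
  unfolding has_vector_derivative_def by (simp add: algebra_simps)

lemma invpow_deriv:
  fixes w :: "real \<Rightarrow> complex"
  assumes "(w has_vector_derivative w') (at x)" "w x \<noteq> 0"
  shows "((\<lambda>x. inverse (w x) ^ k) has_vector_derivative (- of_nat k * w' * inverse (w x) ^ (k+1))) (at x)"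
proof (induction k)
  case 0
  then show ?case by simp
next
  case (Suc k)
  have "((\<lambda>x. inverse (w x) * inverse (w x) ^ k) has_vector_derivative
     (inverse (w x) * (- of_nat k * w' * inverse (w x) ^ (k+1)) + (- (inverse (w x) * w' * inverse (w x))) * inverse (w x) ^ k)) (at x)"
    by (rule has_vector_derivative_mult[OF inv_deriv[OF assms] Suc])
  then show ?case by (simp add: algebra_simps)
qed

definition psum :: "(real \<Rightarrow> complex) \<Rightarrow> ((real \<Rightarrow> complex) \<times> nat) list \<Rightarrow> real \<Rightarrow> complex" where
  "psum w L x = sum_list (map (\<lambda>(h,k). h x * inverse (w x) ^ k) L)"

lemma psum_simps[simp]: "psum w [] x = 0" "psum w ((h,k) # L) x = h x * inverse (w x) ^ k + psum w L x"
  by (auto simp: psum_def)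

definition pder where
  "pder w L = concat (map (\<lambda>(h,k). [(der bnd h, k), (\<lambda>x. - of_nat k * h x * der bnd w x, k+1)]) L)"

lemma pder_simps[simp]: "pder w [] = []"
  "pder w ((h,k)#L) = (der bnd h, k) # (\<lambda>x. - of_nat k * h x * der bnd w x, k+1) # pder w L"
  by (auto simp: pder_def)

context
  fixes w :: "real \<Rightarrow> complex"
  assumes w: "smA bnd w" "\<And>x. 1 \<le> norm (w x)"
begin

lemma w0: "w x \<noteq> 0" using w(2)[of x] by auto

lemma rinv_le: "norm (inverse (w x) ^ k) \<le> 1"
  using w(2)[of x] by (simp add: norm_power norm_inverse power_le_one inverse_le_1_iff)

lemma psum_bnd: "(\<forall>(h,k)\<in>set L. smA bnd h) \<Longrightarrow> bnd (psum w L)"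
proof (induction L)
  case Nil
  then show ?case by (auto simp: psum_def[abs_def] bnd_def intro: exI[of _ 0])
next
  case (Cons a L)
  obtain h k where a: "a = (h,k)" by force
  have "bnd h" using Cons.prems a smA_D(1) by auto
  hence "bnd (\<lambda>x. h x * inverse (w x) ^ k)"
    by (rule bnd_mult) (auto simp: bnd_def intro!: exI[of _ 1] rinv_le)
  hence "bnd (\<lambda>x. h x * inverse (w x) ^ k + psum w L x)"
    using Cons by (intro bnd_add) auto
  then show ?case using a by simp
qed

lemma psum_deriv:
  "(\<forall>(h,k)\<in>set L. smA bnd h) \<Longrightarrow> (psum w L has_vector_derivative psum w (pder w L) x) (at x)"
proof (induction L)
  case Nil
  then show ?case by (simp add: psum_def[abs_def])
next
  case (Cons a L)
  obtain h k where a: "a = (h,k)" by force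
  have h: "(h has_vector_derivative der bnd h x) (at x)"
    using Cons.prems a smA_D(2) by auto
  have "((\<lambda>x. h x * inverse (w x) ^ k + psum w L x) has_vector_derivative
     (h x * (- of_nat k * der bnd w x * inverse (w x) ^ (k+1)) + der bnd h x * inverse (w x) ^ k) + psum w (pder w L) x) (at x)"
    using Cons by (intro has_vector_derivative_add has_vector_derivative_mult h
        invpow_deriv smA_D(2)[OF w(1)] w0) auto
  then show ?case using a by (simp add: algebra_simps)
qed

lemma pder_ok: "(\<forall>(h,k)\<in>set L. smA bnd h) \<Longrightarrow> (\<forall>(h,k)\<in>set (pder w L). smA bnd h)"
proof (induction L)
  case Nil
  then show ?case by simp
next
  case (Cons a L)
  obtain h k where a: "a = (h,k)" by force
  have "smA bnd h" using Cons.prems a by auto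
  have "smA bnd (\<lambda>x. (- of_nat k) * h x * der bnd w x)"
    by (rule sm_bb[OF sm_bb[OF sm_const \<open>smA bnd h\<close>] smA_D(3)[OF w(1)]])
  hence "smA bnd (der bnd h)" "smA bnd (\<lambda>x. (- of_nat k) * h x * der bnd w x)"
    using smA_D(3) \<open>smA bnd h\<close> by auto
  moreover have "(\<lambda>x. (- of_nat k) * h x * der bnd w x) = (\<lambda>x. - of_nat k * h x * der bnd w x)" by simp
  ultimately have "smA bnd (der bnd h)" "smA bnd (\<lambda>x. - of_nat k * h x * der bnd w x)" by metis+
  then show ?case using Cons a by auto
qed

lemma sm_inv: "smA bnd (\<lambda>x. inverse (w x))"
proof -
  have "smA bnd F" if "\<exists>L. F = psum w L \<and> (\<forall>(h,k)\<in>set L. smA bnd h)" for F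
    using that
  proof (coinduction arbitrary: F rule: smA.coinduct)
    case smA
    then obtain L where L: "F = psum w L" "\<forall>(h,k)\<in>set L. smA bnd h" by blast
    show ?case
      apply (rule exI[of _ "psum w L"], rule exI[of _ "psum w (pder w L)"])
      using psum_bnd[OF L(2)] psum_deriv[OF L(2)] pder_ok[OF L(2)] L(1) by blast
  qed
  moreover have "psum w [(\<lambda>x. 1, 1)] = (\<lambda>x. inverse (w x))" by (rule ext) simp
  ultimately show ?thesis using sm_const by (metis empty_iff list.set(1) set_ConsD case_prodI2 prod.inject)
qed

end



lemma bnd_cnj: "bnd f \<Longrightarrow> bnd (\<lambda>x. cnj (f x))" by (simp add: bnd_def)

lemma decomp_schwartz:
  fixes g :: "real \<Rightarrow> complex" and lam :: real and N :: nat
  assumes g: "schwartz g" and lam: "lam > 0"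
  defines "W \<equiv> (\<lambda>x. complex_of_real (1 + (cmod (g x) / lam) ^ (2*N)))"
  shows "schwartz (\<lambda>x. g x * inverse (W x))" "schwartz (\<lambda>x. g x * (1 - inverse (W x)))"
proof -
  have gr: "smA rapid g" by (rule schwartz_smA[OF g])
  have gb: "smA bnd g" by (rule smA_mono[OF gr rapid_bnd])
  have c: "smA bnd (\<lambda>x. cnj (g x))" by (rule sm_cnj[OF gb bnd_cnj])
  have "smA bnd (\<lambda>x. 1 + (complex_of_real (1/lam^2) * (g x * cnj (g x))) ^ N)"
    by (rule sm_bb_add[OF sm_const sm_pow[OF sm_bb[OF sm_const sm_bb[OF gb c]]]])
  moreover have "(\<lambda>x. 1 + (complex_of_real (1/lam^2) * (g x * cnj (g x))) ^ N) = W"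
  proof
    fix x
    have "g x * cnj (g x) = complex_of_real ((cmod (g x))^2)" using complex_norm_square[of "g x"] by simp
    hence "complex_of_real (1/lam^2) * (g x * cnj (g x)) = complex_of_real ((cmod (g x) / lam)^2)"
      by (simp add: power_divide)
    thus "1 + (complex_of_real (1/lam^2) * (g x * cnj (g x))) ^ N = W x"
      unfolding W_def by (simp add: power_mult)
  qed
  ultimately have Wb: "smA bnd W" by simp
  have W1: "1 \<le> norm (W x)" for x
  proof -
    have "0 \<le> (cmod (g x) / lam) ^ (2*N)" using lam by simp
    hence "norm (W x) = 1 + (cmod (g x) / lam) ^ (2*N)" unfolding W_def norm_of_real by simp
    thus ?thesis using \<open>0 \<le> (cmod (g x) / lam) ^ (2*N)\<close> by linarith
  qed
  have inv: "smA bnd (\<lambda>x. inverse (W x))" by (rule sm_inv[OF Wb W1])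
  show "schwartz (\<lambda>x. g x * inverse (W x))" by (rule smA_schwartz[OF sm_rb[OF gr inv]])
  have "smA bnd (\<lambda>x. 1 + (-1) * inverse (W x))"
    by (rule sm_bb_add[OF sm_const sm_bb[OF sm_const inv]])
  hence "smA bnd (\<lambda>x. 1 - inverse (W x))" by simp
  thus "schwartz (\<lambda>x. g x * (1 - inverse (W x)))" by (rule smA_schwartz[OF sm_rb[OF gr]])
qed



lemma locint_meas:
  assumes "locally_integrable f"
  shows "f \<in> borel_measurable lebesgue"
proof (rule borel_measurable_LIMSEQ_metric)
  fix n :: nat
  have "set_integrable lebesgue {-real n..real n} f" using assms unfolding locally_integrable_def by auto
  thus "(\<lambda>x. indicator {-real n..real n} x *\<^sub>R f x) \<in> borel_measurable lebesgue"
    unfolding set_integrable_def by (rule borel_measurable_integrable)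
next
  fix x :: real
  obtain m :: nat where m: "\<bar>x\<bar> \<le> real m" using real_nat_ceiling_ge by blast
  show "(\<lambda>n. indicator {-real n..real n} x *\<^sub>R f x) \<longlonglongrightarrow> f x"
  proof (rule tendsto_eventually)
    show "\<forall>\<^sub>F n in sequentially. indicator {-real n..real n} x *\<^sub>R f x = f x"
      unfolding eventually_sequentially
      by (rule exI[of _ m]) (use m in \<open>auto simp: indicator_def\<close>)
  qed
qed

lemma distrib_mono:
  assumes "f \<in> borel_measurable lebesgue" "s \<le> s'"
  shows "distrib_fun f s' \<le> distrib_fun f s"
  unfolding distrib_fun_def
proof (rule emeasure_mono)
  show "{x. s' < ennreal (cmod (f x))} \<subseteq> {x. s < ennreal (cmod (f x))}" using assms(2) by auto
  have "{x. s < ennreal (cmod (f x))} = {x \<in> space lebesgue. s < ennreal (cmod (f x))}" by simp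
  also have "\<dots> \<in> sets lebesgue" using assms(1) by measurable
  finally show "{x. s < ennreal (cmod (f x))} \<in> sets lebesgue" .
qed

lemma rear_lt:
  assumes "f \<in> borel_measurable lebesgue" "rearrangement f t < s"
  shows "distrib_fun f s \<le> ennreal t"
proof -
  from assms(2) obtain s0 where "s0 < s" "distrib_fun f s0 \<le> ennreal t"
    unfolding rearrangement_def by (auto simp: Inf_less_iff)
  thus ?thesis using distrib_mono[OF assms(1), of s0 s] by (meson less_imp_le order_trans)
qed

lemma ennreal_le_lim:
  fixes d :: ennreal
  assumes "c \<ge> 0" "\<And>t. t > c \<Longrightarrow> d \<le> ennreal t"
  shows "d \<le> ennreal c"
proof (rule ccontr)
  assume "\<not> d \<le> ennreal c"
  hence "ennreal c < d" by simp
  then obtain z where z: "ennreal c < z" "z < d" using dense by blast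
  hence "z < top" using top.not_eq_extremum by fastforce
  then obtain t where t: "z = ennreal t" "t \<ge> 0" by (cases z) auto
  have "c < t" using z(1) t ennreal_less_iff[OF assms(1)] by auto
  hence "d \<le> z" using assms(2) t by auto
  thus False using z(2) by simp
qed

lemma weak_pt:
  assumes "weak_norm f q \<le> M" "t > 0"
  shows "ennreal (t powr recip q) * rearrangement f t \<le> M"
  using assms unfolding weak_norm_def by (meson SUP_upper greaterThan_iff order_trans)

lemma rear_bound:
  assumes "weak_norm f q \<le> ennreal M" "t > 0" "M \<ge> 0"
  shows "rearrangement f t \<le> ennreal (M / t powr recip q)"
proof -
  have pos: "t powr recip q > 0" using assms(2) by simp
  have "ennreal (t powr recip q) * rearrangement f t \<le> ennreal M" by (rule weak_pt[OF assms(1,2)])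
  also have "ennreal M = ennreal (t powr recip q) * ennreal (M / t powr recip q)"
    using pos assms(3) by (simp add: ennreal_mult[symmetric])
  finally show ?thesis using pos by (subst (asm) ennreal_mult_le_mult_iff) auto
qed

lemma weak_distrib_pos:
  assumes meas: "f \<in> borel_measurable lebesgue" and w: "weak_norm f q \<le> ennreal M"
    and b: "recip q = b" "b > 0" and s: "s > 0" and M: "M \<ge> 0"
  shows "distrib_fun f (ennreal s) \<le> ennreal ((M / s) powr (1/b))"
proof (rule ennreal_le_lim)
  show "0 \<le> (M / s) powr (1 / b)" by simp
  fix t assume t: "(M / s) powr (1 / b) < t"
  have t0: "t > 0" using t by (meson le_less_trans powr_ge_zero)
  have "M / s = ((M / s) powr (1/b)) powr b"
    using b M s by (cases "M = 0") (auto simp: powr_powr)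
  also have "\<dots> < t powr b" using t b(2) by (intro powr_less_mono2) auto
  finally have "M / s < t powr b" .
  hence lt: "M / t powr b < s" using s t0 by (simp add: divide_less_eq mult.commute)
  have "rearrangement f t \<le> ennreal (M / t powr b)" using rear_bound[OF w t0 M] b by simp
  also have "\<dots> < ennreal s" using lt s by (intro ennreal_lessI) auto
  finally show "distrib_fun f (ennreal s) \<le> ennreal t" by (rule rear_lt[OF meas])
qed

lemma weak_distrib_zero:
  assumes meas: "f \<in> borel_measurable lebesgue" and w: "weak_norm f q \<le> ennreal M"
    and b: "recip q = 0" and s: "s > M" and M: "M \<ge> 0"
  shows "distrib_fun f (ennreal s) = 0"
proof -
  have "distrib_fun f (ennreal s) \<le> ennreal 0"
  proof (rule ennreal_le_lim)
    fix t :: real assume t0: "0 < t"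
    have "rearrangement f t \<le> ennreal (M / t powr 0)" using rear_bound[OF w t0 M] b by simp
    also have "\<dots> < ennreal s" using s t0 M by (intro ennreal_lessI) auto
    finally show "distrib_fun f (ennreal s) \<le> ennreal t" by (rule rear_lt[OF meas])
  qed simp
  thus ?thesis by simp
qed

lemma distrib_weak:
  assumes b: "recip q = b" "b > 0" and M: "M > 0"
    and d: "\<And>s. s > 0 \<Longrightarrow> distrib_fun f (ennreal s) \<le> ennreal ((M / s) powr (1/b))"
  shows "weak_norm f q \<le> ennreal M"
  unfolding weak_norm_def
proof (rule SUP_least)
  fix t :: real assume "t \<in> {0<..}"
  hence t: "t > 0" by simp
  have pos: "t powr b > 0" using t by simp
  define s where "s = M / t powr b"
  have s0: "s > 0" using M pos by (simp add: s_def)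
  have "(M / s) powr (1/b) = t" using pos b t M by (simp add: s_def powr_powr)
  hence "distrib_fun f (ennreal s) \<le> ennreal t" using d[OF s0] by simp
  hence "rearrangement f t \<le> ennreal s" unfolding rearrangement_def by (intro Inf_lower) simp
  hence "ennreal (t powr recip q) * rearrangement f t \<le> ennreal (t powr b) * ennreal s"
    using b by (simp add: mult_left_mono)
  also have "\<dots> = ennreal M" using pos M by (simp add: s_def ennreal_mult[symmetric])
  finally show "ennreal (t powr recip q) * rearrangement f t \<le> ennreal M" .
qed

lemma weak_zero:
  assumes "weak_norm f q \<le> 0"
  shows "weak_norm f q' = 0"
proof -
  have "rearrangement f t = 0" if t: "t > 0" for t
  proof -
    have "ennreal (t powr recip q) * rearrangement f t \<le> 0" by (rule weak_pt[OF assms t])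
    moreover have "ennreal (t powr recip q) \<noteq> 0" using t by simp
    ultimately show ?thesis by simp
  qed
  thus ?thesis unfolding weak_norm_def by simp
qed



lemma schwartz_meas: "schwartz g \<Longrightarrow> g \<in> borel_measurable lebesgue"
proof -
  assume "schwartz g"
  then obtain D where D: "D 0 = g" "\<And>n x. (D n has_vector_derivative D (Suc n) x) (at x)"
    unfolding schwartz_def by blast
  have "continuous_on UNIV g"
    using D by (metis continuous_at_imp_continuous_on has_vector_derivative_continuous)
  hence "g \<in> borel_measurable borel" by (rule borel_measurable_continuous_onI)
  hence "g \<in> borel_measurable lborel" by simp
  thus ?thesis by (rule measurable_completion)
qed

lemma Lp_fin_eq:
  assumes "p \<noteq> \<infinity>" "(\<integral>\<^sup>+ x. ennreal (norm (h x) powr enn2real p) \<partial>lebesgue) = ennreal I" "I \<ge> 0"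
  shows "Lp_norm h p = ennreal (I powr (1 / enn2real p))"
  using assms unfolding Lp_norm_def by (simp add: Let_def)

lemma Lp_fin_bound:
  assumes p: "p \<noteq> \<infinity>" "enn2real p > 0" and hm: "h \<in> borel_measurable lebesgue"
    and gm: "g \<in> borel_measurable lebesgue" and c: "c \<ge> 0"
    and pt: "\<And>x. norm (h x) powr enn2real p \<le> c * norm (g x) powr e"
    and I: "(\<integral>\<^sup>+ x. ennreal (norm (g x) powr e) \<partial>lebesgue) = ennreal I" "I \<ge> 0"
  shows "Lp_norm h p \<le> ennreal ((c * I) powr (1 / enn2real p))"
proof -
  have "(\<integral>\<^sup>+ x. ennreal (norm (h x) powr enn2real p) \<partial>lebesgue)
        \<le> (\<integral>\<^sup>+ x. ennreal c * ennreal (norm (g x) powr e) \<partial>lebesgue)"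
    using pt c by (intro nn_integral_mono) (simp add: ennreal_mult[symmetric])
  also have "\<dots> = ennreal c * ennreal I" using gm I by (subst nn_integral_cmult) auto
  also have "\<dots> = ennreal (c * I)" using c I by (simp add: ennreal_mult)
  finally have le: "(\<integral>\<^sup>+ x. ennreal (norm (h x) powr enn2real p) \<partial>lebesgue) \<le> ennreal (c * I)" .
  have nt: "(\<integral>\<^sup>+ x. ennreal (norm (h x) powr enn2real p) \<partial>lebesgue) \<noteq> top"
    using le by (metis ennreal_neq_top neq_top_trans)
  define J where "J = enn2real (\<integral>\<^sup>+ x. ennreal (norm (h x) powr enn2real p) \<partial>lebesgue)"
  have J: "(\<integral>\<^sup>+ x. ennreal (norm (h x) powr enn2real p) \<partial>lebesgue) = ennreal J" "J \<ge> 0"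
    using nt unfolding J_def by (auto simp: ennreal_enn2real_if)
  have "J \<le> c * I" using le J(1) c I(2) ennreal_le_iff[of "c*I" J] by simp
  hence "J powr (1 / enn2real p) \<le> (c * I) powr (1 / enn2real p)" using J p by (intro powr_mono2) auto
  thus ?thesis using Lp_fin_eq[OF p(1) J] by simp
qed

lemma Lp_inf_bound:
  assumes "\<And>x. norm (h x) \<le> c"
  shows "Lp_norm h top \<le> ennreal c"
  unfolding Lp_norm_def using assms by (auto intro!: Inf_lower AE_I2 ennreal_leI)

lemma Lp_zero:
  assumes p: "p \<noteq> \<infinity>" and gm: "g \<in> borel_measurable lebesgue" and e: "e > 0"
    and I: "(\<integral>\<^sup>+ x. ennreal (norm (g x) powr e) \<partial>lebesgue) = 0"
  shows "Lp_norm g p = 0"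
proof -
  have "AE x in lebesgue. ennreal (norm (g x) powr e) = 0"
    using I gm by (subst (asm) nn_integral_0_iff_AE) auto
  hence ae: "AE x in lebesgue. g x = 0" by eventually_elim (use e in auto)
  have ae2: "AE x in lebesgue. ennreal (norm (g x) powr enn2real p) = 0"
    using ae by eventually_elim auto
  have "(\<integral>\<^sup>+ x. ennreal (norm (g x) powr enn2real p) \<partial>lebesgue) = 0"
    using gm ae2 by (subst nn_integral_0_iff_AE) auto
  hence "(\<integral>\<^sup>+ x. ennreal (norm (g x) powr enn2real p) \<partial>lebesgue) = ennreal 0" by simp
  from Lp_fin_eq[OF p this] show ?thesis by simp
qed



lemma core_real:
  fixes K0 K1 I s \<theta> a0 a1 b0 b1 \<mu> a b u L lam B1 B2 :: real
  assumes pos: "K0 > 0" "K1 > 0" "I > 0" "s > 0" "0 < \<theta>" "\<theta> < 1" "\<mu> > 0"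
    and ex: "a0 - a1 = \<mu>" "b0 - b1 = \<mu>" "a1 \<ge> 0" "b1 \<ge> 0"
  assumes a_def: "a = (1-\<theta>)*a0 + \<theta>*a1" and b_def: "b = (1-\<theta>)*b0 + \<theta>*b1"
  assumes u_def: "u = 2 * (K0 powr (1-\<theta>) * K1 powr \<theta>) * I powr a / s"
  assumes L_def: "L = (K0/K1) * I powr \<mu> * u powr (-\<mu>/b) / 2"
  assumes lam_def: "lam = L powr (a/\<mu>)"
  assumes B1_def: "B1 = lam powr (1 - a0/a) * I powr a0" and B2_def: "B2 = lam powr (1 - a1/a) * I powr a1"
  shows "lam > 0"
    "ln (2*K0*B1/s) = \<theta> * ln 2 + (b0/b) * ln u"
    "ln (2*K1*B2/s) = -(1-\<theta>) * ln 2 + (b1/b) * ln u"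
    "2*K0*B1/s > 0" "2*K1*B2/s > 0" "u > 0"
proof -
  have a: "a > 0" unfolding a_def using pos ex
    by (smt (verit) mult_nonneg_nonneg mult_pos_pos)
  have b: "b > 0" unfolding b_def using pos ex
    by (smt (verit) mult_nonneg_nonneg mult_pos_pos)
  have u: "u > 0" unfolding u_def using pos by simp
  have L: "L > 0" unfolding L_def using pos u by simp
  show lam: "lam > 0" unfolding lam_def using L by simp
  have B1: "B1 > 0" unfolding B1_def using lam pos by simp
  have B2: "B2 > 0" unfolding B2_def using lam pos by simp
  show "2*K0*B1/s > 0" "2*K1*B2/s > 0" "u > 0" using B1 B2 u pos by auto
  have lu: "ln u = ln 2 + (1-\<theta>) * ln K0 + \<theta> * ln K1 + a * ln I - ln s"
    unfolding u_def using pos by (simp add: ln_mult ln_div ln_powr)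
  have lL: "ln L = ln K0 - ln K1 + \<mu> * ln I - (\<mu>/b) * ln u - ln 2"
    unfolding L_def using pos u by (simp add: ln_mult ln_div ln_powr)
  have llam: "ln lam = (a/\<mu>) * ln L" unfolding lam_def using L by (simp add: ln_powr)
  have lB1: "ln B1 = (1 - a0/a) * ln lam + a0 * ln I" unfolding B1_def using lam pos by (simp add: ln_mult ln_powr)
  have lB2: "ln B2 = (1 - a1/a) * ln lam + a1 * ln I" unfolding B2_def using lam pos by (simp add: ln_mult ln_powr)
  have e1: "ln (2*K0*B1/s) = ln 2 + ln K0 + ln B1 - ln s" using pos B1 by (simp add: ln_mult ln_div)
  have e2: "ln (2*K1*B2/s) = ln 2 + ln K1 + ln B2 - ln s" using pos B2 by (simp add: ln_mult ln_div)
  have a0: "a0 = a1 + \<mu>" "b0 = b1 + \<mu>" using ex by auto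
  have aa: "a = a0 - \<theta>*\<mu>" "a = a1 + (1-\<theta>)*\<mu>" unfolding a_def a0 by (simp_all add: algebra_simps)
  have "(1 - a0/a)*(a/\<mu>) = (a - a0)/\<mu>" using a pos(7) by (simp add: field_simps)
  hence c1: "(1 - a0/a)*(a/\<mu>) = -\<theta>" using pos(7) aa(1) by simp
  have "(1 - a1/a)*(a/\<mu>) = (a - a1)/\<mu>" using a pos(7) by (simp add: field_simps)
  hence c2: "(1 - a1/a)*(a/\<mu>) = 1-\<theta>" using pos(7) aa(2) by simp
  have r0: "b0/b = 1 + \<theta> * (\<mu>/b)" using b unfolding b_def a0 by (simp add: field_simps)
  have r1: "b1/b = 1 - (1-\<theta>) * (\<mu>/b)" using b unfolding b_def a0 by (simp add: field_simps)
  have lB1': "ln B1 = -\<theta> * ln L + a0 * ln I" unfolding lB1 llam using c1 by (metis mult.assoc mult_minus_left)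
  have lB2': "ln B2 = (1-\<theta>) * ln L + a1 * ln I" unfolding lB2 llam using c2 by (metis mult.assoc)
  show "ln (2*K0*B1/s) = \<theta> * ln 2 + (b0/b) * ln u"
    unfolding e1 lB1' lL r0 using lu aa(1) by (simp add: algebra_simps)
  show "ln (2*K1*B2/s) = -(1-\<theta>) * ln 2 + (b1/b) * ln u"
    unfolding e2 lB2' lL r1 using lu aa(2) by (simp add: algebra_simps)
qed

lemma fr1:
  fixes X u b b0 \<mu> \<theta> :: real
  assumes "X > 0" "u > 0" "ln X = \<theta> * ln 2 + (b0/b) * ln u" "b > 0" "b0 \<ge> \<mu>" "\<mu> > 0" "0 < \<theta>" "\<theta> < 1"
  shows "X powr (1/b0) \<le> 2 powr (1/\<mu>) * u powr (1/b)"
proof -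
  have b0: "b0 > 0" using assms by simp
  have "X powr (1/b0) = exp (\<theta> * ln 2 / b0 + ln u / b)"
    using assms(1,3) b0 by (simp add: powr_def field_simps)
  also have "\<dots> \<le> exp (ln 2 / \<mu> + ln u / b)"
  proof -
    have "\<theta> * ln 2 / b0 \<le> ln 2 / b0" using assms b0 by (simp add: divide_right_mono)
    also have "\<dots> \<le> ln 2 / \<mu>" using assms b0 by (intro divide_left_mono) auto
    finally show ?thesis by simp
  qed
  also have "\<dots> = 2 powr (1/\<mu>) * u powr (1/b)" using assms by (simp add: powr_def exp_add)
  finally show ?thesis .
qed

lemma fr2:
  fixes X u b b1 \<theta> :: real
  assumes "X > 0" "u > 0" "ln X = -(1-\<theta>) * ln 2 + (b1/b) * ln u" "b > 0" "b1 > 0" "\<theta> < 1"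
  shows "X powr (1/b1) \<le> u powr (1/b)"
proof -
  have "X powr (1/b1) = exp (-(1-\<theta>) * ln 2 / b1 + ln u / b)"
    using assms by (simp add: powr_def field_simps)
  also have "\<dots> \<le> exp (ln u / b)"
  proof -
    have l2: "ln (2::real) > 0" by simp
    have "-(1-\<theta>) * ln 2 \<le> 0" using assms l2 by (simp add: mult_nonpos_nonneg)
    hence "-(1-\<theta>) * ln 2 / b1 \<le> 0" using assms by (simp add: divide_nonpos_pos)
    thus ?thesis by simp
  qed
  also have "\<dots> = u powr (1/b)" using assms by (simp add: powr_def)
  finally show ?thesis .
qed

lemma fr3:
  fixes X u b :: real
  assumes "X > 0" "ln X = -(1-\<theta>) * ln 2 + (0/b) * ln u" "\<theta> < 1"
  shows "X < 1"
proof -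
  have l2: "ln (2::real) > 0" by simp
  have "ln X < 0" using assms l2 by (simp add: mult_neg_pos)
  thus ?thesis using assms(1) by simp
qed

lemma fr4:
  fixes u b \<mu> :: real
  assumes "0 < b" "b \<le> 2" "\<mu> > 0" "u > 0"
  shows "2 powr (1/\<mu>) * u powr (1/b) + u powr (1/b) \<le> (4 powr (1 + 1/\<mu>) * u) powr (1/b)"
proof -
  have "1 \<le> 2 powr (1/\<mu>)" using assms by (intro ge_one_powr_ge_zero) auto
  hence "2 powr (1/\<mu>) + 1 \<le> 2 * 2 powr (1/\<mu>)" by simp
  also have "\<dots> = 2 powr (1 + 1/\<mu>)" by (simp add: powr_add)
  also have "\<dots> = 4 powr ((1 + 1/\<mu>)/2)"
    by (simp add: powr_powr[symmetric])
  also have "\<dots> \<le> 4 powr ((1 + 1/\<mu>)/b)" using assms by (intro powr_mono divide_left_mono) auto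
  also have "\<dots> = (4 powr (1 + 1/\<mu>)) powr (1/b)" by (simp add: powr_powr)
  finally have "(2 powr (1/\<mu>) + 1) * u powr (1/b) \<le> (4 powr (1 + 1/\<mu>)) powr (1/b) * u powr (1/b)"
    by (simp add: mult_right_mono)
  thus ?thesis using assms by (simp add: powr_mult distrib_right)
qed



lemma ptA:
  fixes w e0 e :: real
  assumes "w \<ge> 0" "0 < e0" "e0 < e" "real (2*N+1) * e0 \<ge> e"
  shows "(w * (w^(2*N)/(1+w^(2*N)))) powr e0 \<le> w powr e"
proof (cases "w \<ge> 1")
  case True
  have pw: "0 \<le> w^(2*N)" using assms(1) by simp
  have d: "0 < 1 + w^(2*N)" using pw by linarith
  have h: "w^(2*N)/(1+w^(2*N)) \<le> 1" by (subst pos_divide_le_eq[OF d]) simp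
  have "(w * (w^(2*N)/(1+w^(2*N)))) powr e0 \<le> w powr e0"
    using assms h by (intro powr_mono2) (auto simp: mult_left_le simp del: times_divide_eq_right)
  also have "\<dots> \<le> w powr e" using True assms by (intro powr_mono) auto
  finally show ?thesis .
next
  case False
  show ?thesis
  proof (cases "w = 0")
    case True thus ?thesis using assms by simp
  next
    case w0: False
    hence wp: "w > 0" using assms by simp
    have pw: "0 \<le> w^(2*N)" using assms(1) by simp
    have d: "0 < 1 + w^(2*N)" using pw by linarith
    have h: "w^(2*N)/(1+w^(2*N)) \<le> w^(2*N)" using pw by (subst pos_divide_le_eq[OF d]) (simp add: algebra_simps)
    have "(w * (w^(2*N)/(1+w^(2*N)))) powr e0 \<le> (w * w^(2*N)) powr e0"
      using assms h wp by (intro powr_mono2 mult_left_mono) auto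
    also have "(w * w^(2*N)) = w powr (real (2*N+1))" using wp
      by (simp add: powr_realpow[symmetric] powr_add)
    also have "(w powr (real (2*N+1))) powr e0 = w powr (real (2*N+1) * e0)" by (simp add: powr_powr)
    also have "\<dots> \<le> w powr e" using False wp assms by (intro powr_mono') auto
    finally show ?thesis .
  qed
qed

lemma ptB:
  fixes w e1 e :: real
  assumes "w \<ge> 0" "0 < e" "e < e1" "N \<ge> 1"
  shows "(w / (1+w^(2*N))) powr e1 \<le> w powr e"
proof (cases "w \<ge> 1")
  case True
  have "w \<le> w^(2*N)" using True assms(4)
    by (metis le_add2 mult_2 order.trans power_increasing power_one_right)
  hence h: "w / (1+w^(2*N)) \<le> 1" using assms(1) by (simp add: divide_le_eq)
  have "(w / (1+w^(2*N))) powr e1 \<le> 1 powr e1"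
    using assms h by (intro powr_mono2) auto
  also have "\<dots> \<le> w powr e" using True assms using ge_one_powr_ge_zero by auto
  finally show ?thesis .
next
  case False
  have pw: "0 \<le> w^(2*N)" using assms(1) by simp
  have d: "0 < 1 + w^(2*N)" using pw by linarith
  have h: "w / (1+w^(2*N)) \<le> w" using assms(1) pw by (subst pos_divide_le_eq[OF d]) (simp add: algebra_simps)
  have "(w / (1+w^(2*N))) powr e1 \<le> w powr e1" using assms h by (intro powr_mono2) auto
  also have "\<dots> \<le> w powr e" using False assms by (intro powr_mono') auto
  finally show ?thesis .
qed

lemma ptC:
  fixes w :: real
  assumes "w \<ge> 0" "N \<ge> 1"
  shows "w / (1+w^(2*N)) \<le> 1"
proof (cases "w \<ge> 1")
  case True
  have "w \<le> w^(2*N)" using True assms(2)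
    by (metis le_add2 mult_2 order.trans power_increasing power_one_right)
  thus ?thesis using assms(1) by (simp add: divide_le_eq)
next
  case False
  thus ?thesis using assms(1) by (simp add: divide_le_eq) (smt (verit) zero_le_power)
qed

lemma ptA':
  fixes y lam e0 e :: real
  assumes "y \<ge> 0" "lam > 0" "0 < e0" "e0 < e" "real (2*N+1) * e0 \<ge> e"
  shows "(y * ((y/lam)^(2*N)/(1+(y/lam)^(2*N)))) powr e0 \<le> lam powr (e0 - e) * y powr e"
proof -
  define w where "w = y / lam"
  have y: "y = lam * w" using assms(2) by (simp add: w_def)
  have w: "w \<ge> 0" using assms by (simp add: w_def)
  have "(y * (w^(2*N)/(1+w^(2*N)))) powr e0 = lam powr e0 * (w * (w^(2*N)/(1+w^(2*N)))) powr e0"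
    unfolding y using assms(2) w by (subst powr_mult[symmetric]) (auto simp: mult.assoc)
  also have "\<dots> \<le> lam powr e0 * w powr e" using ptA[OF w assms(3-5)] by (simp add: mult_left_mono)
  also have "\<dots> = lam powr (e0 - e) * y powr e" unfolding y using assms(2) w
    by (simp add: powr_mult powr_diff)
  finally show ?thesis by (simp add: w_def)
qed

lemma ptB':
  fixes y lam e1 e :: real
  assumes "y \<ge> 0" "lam > 0" "0 < e" "e < e1" "N \<ge> 1"
  shows "(y / (1+(y/lam)^(2*N))) powr e1 \<le> lam powr (e1 - e) * y powr e"
proof -
  define w where "w = y / lam"
  have y: "y = lam * w" using assms(2) by (simp add: w_def)
  have w: "w \<ge> 0" using assms by (simp add: w_def)
  have "(y / (1+w^(2*N))) powr e1 = lam powr e1 * (w / (1+w^(2*N))) powr e1"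
    unfolding y using assms(2) w by (simp add: powr_mult powr_divide)
  also have "\<dots> \<le> lam powr e1 * w powr e" using ptB[OF w assms(3-5)] by (simp add: mult_left_mono)
  also have "\<dots> = lam powr (e1 - e) * y powr e" unfolding y using assms(2) w
    by (simp add: powr_mult powr_diff)
  finally show ?thesis by (simp add: w_def)
qed

lemma ptC':
  fixes y lam :: real
  assumes "y \<ge> 0" "lam > 0" "N \<ge> 1"
  shows "y / (1+(y/lam)^(2*N)) \<le> lam"
proof -
  define w where "w = y / lam"
  have y: "y = lam * w" using assms(2) by (simp add: w_def)
  have w: "w \<ge> 0" using assms by (simp add: w_def)
  have "y / (1+w^(2*N)) = lam * (w / (1+w^(2*N)))" unfolding y by simp
  also have "\<dots> \<le> lam * 1" using ptC[OF w assms(3)] assms(2) by (intro mult_left_mono) auto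
  finally show ?thesis by (simp add: w_def)
qed



lemma recip_top: "recip top = 0" by (simp add: recip_def)

lemma recip_fin: "r > 0 \<Longrightarrow> recip (ennreal r) = 1 / r"
  by (simp add: recip_def inverse_ennreal divide_inverse)

lemma recip_ge: "recip q \<ge> 0" by (simp add: recip_def)

lemma half_enn: "(1/2::ennreal) = ennreal (1/2)"
  using divide_ennreal[of 1 2] by simp

lemma half_le: "1/2 \<le> ennreal r \<Longrightarrow> r \<ge> 1/2"
proof -
  assume H: "1/2 \<le> ennreal r"
  hence H2: "ennreal (1/2) \<le> ennreal r" by (subst half_enn[symmetric])
  show ?thesis
  proof (rule ccontr)
    assume "\<not> r \<ge> 1/2"
    hence "ennreal r < ennreal (1/2)" by (intro ennreal_lessI) auto
    thus False using H2 by simp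
  qed
qed

lemma recip_le2: assumes "1/2 \<le> q" shows "recip q \<le> 2"
proof (cases q)
  case (real r)
  hence r: "r \<ge> 1/2" using assms half_le by simp
  have "recip q = 1 / r" using real r recip_fin[of r] by simp
  also have "1 / r \<le> 2" using r by (simp add: divide_le_eq)
  finally show ?thesis .
qed (simp add: recip_top)

lemma inv_enn: "r > 0 \<Longrightarrow> inverse (ennreal r) = ennreal (1/r)"
  by (simp add: inverse_ennreal divide_inverse)

lemma recip_inv: "r > 0 \<Longrightarrow> recip (inverse (ennreal r)) = r"
  unfolding inv_enn by (subst recip_fin) auto

lemma e2r_inv: "r > 0 \<Longrightarrow> enn2real (inverse (ennreal r)) = 1 / r"
  unfolding inv_enn by simp



lemma distrib_real: "s \<ge> 0 \<Longrightarrow> distrib_fun f (ennreal s) = emeasure lebesgue {x. s < norm (f x)}"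
  unfolding distrib_fun_def by (simp add: ennreal_less_iff)

lemma core_case:
  fixes T :: "(real \<Rightarrow> complex) \<Rightarrow> (real \<Rightarrow> complex)" and g :: "real \<Rightarrow> complex"
  assumes e0: "e0 > 0" "p0 = ennreal e0" "a0 = 1/e0"
    and p1: "(p1 = top \<and> a1 = 0) \<or> (p1 = ennreal e1 \<and> e1 > e0 \<and> a1 = 1/e1)"
    and bq: "b0 = recip q0" "b1 = recip q1" "b1 \<ge> 0" "b0 \<le> 2"
    and mu: "a0 - a1 = \<mu>" "b0 - b1 = \<mu>" "\<mu> > 0"
    and sub: "sublinear_op T" and li: "\<And>g. schwartz g \<Longrightarrow> locally_integrable (T g)"
    and K: "K0 > 0" "K1 > 0"
    and w0: "\<And>g. schwartz g \<Longrightarrow> weak_norm (T g) q0 \<le> ennreal K0 * Lp_norm g p0"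
    and w1: "\<And>g. schwartz g \<Longrightarrow> weak_norm (T g) q1 \<le> ennreal K1 * Lp_norm g p1"
    and th: "0 < \<theta>" "\<theta> < 1" and g: "schwartz g"
    and a_def: "a = (1-\<theta>)*a0 + \<theta>*a1" and b_def: "b = (1-\<theta>)*b0 + \<theta>*b1"
    and I: "I > 0" "(\<integral>\<^sup>+ x. ennreal (norm (g x) powr (1/a)) \<partial>lebesgue) = ennreal I"
  shows "weak_norm (T g) (inverse (ennreal b))
     \<le> ennreal (2 * 4 powr (1 + 1/\<mu>) * K0 powr (1-\<theta>) * K1 powr \<theta> * I powr a)"
proof -
  have a1: "a1 \<ge> 0" using p1 e0 by auto
  have a: "a > 0" unfolding a_def using th a1 mu e0
    by (smt (verit) mult_nonneg_nonneg mult_pos_pos)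
  have b: "b > 0" unfolding b_def using th bq mu
    by (smt (verit) mult_nonneg_nonneg mult_pos_pos)
  have aa: "a = a0 - \<theta>*\<mu>" "a = a1 + (1-\<theta>)*\<mu>" using mu unfolding a_def by (simp_all add: algebra_simps)
  have bb1: "b0 = b + \<theta>*\<mu>" using mu unfolding b_def by (simp add: algebra_simps)
  have "\<theta>*\<mu> \<ge> 0" using th mu by simp
  hence bb: "b0 = b + \<theta>*\<mu>" "b \<le> 2" using bb1 bq by linarith+
  have b0: "b0 \<ge> \<mu>" using mu bq by simp
  define C where "C = 2 * 4 powr (1 + 1/\<mu>)"
  define M where "M = C * K0 powr (1-\<theta>) * K1 powr \<theta> * I powr a"
  have Mpos: "M > 0" unfolding M_def C_def using K I by simp
  have gm: "g \<in> borel_measurable lebesgue" by (rule schwartz_meas[OF g])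
  show ?thesis unfolding M_def[symmetric] C_def[symmetric]
  proof (rule distrib_weak[OF recip_inv[OF b] b Mpos])
    fix s :: real assume s: "s > 0"
    define u where "u = 2 * (K0 powr (1-\<theta>) * K1 powr \<theta>) * I powr a / s"
    define L where "L = (K0/K1) * I powr \<mu> * u powr (-\<mu>/b) / 2"
    define lam where "lam = L powr (a/\<mu>)"
    define B1 where "B1 = lam powr (1 - a0/a) * I powr a0"
    define B2 where "B2 = lam powr (1 - a1/a) * I powr a1"
    note cr = core_real[OF K I(1) s th mu(3) mu(1) mu(2) a1 bq(3) a_def b_def u_def L_def lam_def B1_def B2_def]
    have lam: "lam > 0" by (rule cr(1))
    define N :: nat where "N = nat \<lceil>a0/a\<rceil> + 1"
    have N1: "N \<ge> 1" unfolding N_def by simp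
    have N2: "real (2*N+1) * e0 \<ge> 1/a"
    proof -
      have "a0/a \<le> real N" unfolding N_def by linarith
      hence "a0/a \<le> real (2*N+1)" by simp
      moreover have "a0/a = 1/(e0*a)" using e0 by simp
      ultimately have "1/(e0*a) \<le> real (2*N+1)" by simp
      hence "1 \<le> real (2*N+1) * (e0*a)" using e0 a by (simp add: divide_le_eq)
      thus ?thesis using a by (simp add: divide_le_eq mult.assoc)
    qed
    define W where "W = (\<lambda>x. complex_of_real (1 + (cmod (g x) / lam) ^ (2*N)))"
    define g2 where "g2 = (\<lambda>x. g x * inverse (W x))"
    define g1 where "g1 = (\<lambda>x. g x * (1 - inverse (W x)))"
    have sg2: "schwartz g2" unfolding g2_def W_def by (rule decomp_schwartz(1)[OF g lam])
    have sg1: "schwartz g1" unfolding g1_def W_def by (rule decomp_schwartz(2)[OF g lam])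
    have gsum: "(\<lambda>y. g1 y + g2 y) = g" unfolding g1_def g2_def by (auto simp: algebra_simps)
    have tpos: "0 \<le> (cmod (g x) / lam) ^ (2*N)" for x using lam by simp
    have Wn: "norm (W x) = 1 + (cmod (g x) / lam) ^ (2*N)" for x
    proof -
      have "norm (W x) = \<bar>1 + (cmod (g x) / lam) ^ (2*N)\<bar>" unfolding W_def norm_of_real ..
      thus ?thesis using tpos[of x] by linarith
    qed
    have ng2: "norm (g2 x) = cmod (g x) / (1 + (cmod (g x) / lam) ^ (2*N))" for x
      unfolding g2_def norm_mult norm_inverse Wn by (simp add: divide_inverse)
    have ng1: "norm (g1 x) = cmod (g x) * ((cmod (g x) / lam) ^ (2*N) / (1 + (cmod (g x) / lam) ^ (2*N)))" for x
    proof -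
      have d: "1 + (cmod (g x) / lam) ^ (2*N) > 0" using tpos[of x] by linarith
      have gen: "1 - inverse (complex_of_real (1+t)) = complex_of_real (t/(1+t))" if "t \<ge> 0" for t :: real
      proof -
        have "1 - inverse (complex_of_real (1+t)) = complex_of_real (1 - inverse (1+t))"
          by (simp only: of_real_diff of_real_inverse of_real_1)
        also have "1 - inverse (1+t) = t/(1+t)" using that by (simp add: field_simps)
        finally show ?thesis .
      qed
      have "1 - inverse (W x) = complex_of_real ((cmod (g x) / lam) ^ (2*N) / (1 + (cmod (g x) / lam) ^ (2*N)))"
        unfolding W_def by (rule gen[OF tpos])
      hence "norm (g1 x) = cmod (g x) * \<bar>(cmod (g x) / lam) ^ (2*N) / (1 + (cmod (g x) / lam) ^ (2*N))\<bar>"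
        unfolding g1_def norm_mult by (simp only: norm_of_real)
      thus ?thesis using tpos[of x] d by (simp only: abs_of_nonneg divide_nonneg_pos)
    qed
    have g1m: "g1 \<in> borel_measurable lebesgue" by (rule schwartz_meas[OF sg1])
    have g2m: "g2 \<in> borel_measurable lebesgue" by (rule schwartz_meas[OF sg2])
    have Tm: "T g \<in> borel_measurable lebesgue" "T g1 \<in> borel_measurable lebesgue" "T g2 \<in> borel_measurable lebesgue"
      using locint_meas li g sg1 sg2 by auto
    have a0a: "a < a0" using aa th mu by simp
    have e0e: "e0 < 1/a" using a0a a e0 by (simp add: field_simps)
    have Lg1: "Lp_norm g1 p0 \<le> ennreal B1"
    proof -
      have "Lp_norm g1 p0 \<le> ennreal ((lam powr (e0 - 1/a) * I) powr (1 / enn2real p0))"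
        apply (rule Lp_fin_bound[OF _ _ g1m gm _ _ I(2)])
        using e0 lam I ptA'[OF norm_ge_zero lam e0(1) e0e N2] ng1 by auto
      also have "(lam powr (e0 - 1/a) * I) powr (1 / enn2real p0) = B1"
      proof -
        have ex: "(e0 - 1/a) / e0 = 1 - 1/(e0*a)" using e0 a by (simp add: field_simps)
        show ?thesis unfolding B1_def e0(3) using e0 lam I a
          by (simp add: powr_mult powr_powr ex)
      qed
      finally show ?thesis .
    qed
    have Lg2: "Lp_norm g2 p1 \<le> ennreal B2"
      using p1
    proof
      assume "p1 = top \<and> a1 = 0"
      hence "p1 = top" "a1 = 0" by auto
      have "Lp_norm g2 p1 \<le> ennreal lam" unfolding \<open>p1 = top\<close>
        by (rule Lp_inf_bound) (simp add: ng2 ptC'[OF norm_ge_zero lam N1])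
      also have "lam = B2" unfolding B2_def using \<open>a1 = 0\<close> lam I by simp
      finally show ?thesis .
    next
      assume "p1 = ennreal e1 \<and> e0 < e1 \<and> a1 = 1 / e1"
      hence p1e: "p1 = ennreal e1" "e0 < e1" "a1 = 1/e1" by auto
      have e1: "e1 > 0" using p1e e0 by simp
      have "(1-\<theta>)*\<mu> > 0" using th mu by simp
      hence a1a: "a1 < a" using aa(2) by linarith
      have ee1: "1/a < e1" using a1a a e1 p1e by (simp add: field_simps)
      have "Lp_norm g2 p1 \<le> ennreal ((lam powr (e1 - 1/a) * I) powr (1 / enn2real p1))"
        apply (rule Lp_fin_bound[OF _ _ g2m gm _ _ I(2)])
        using p1e e1 lam I ptB'[OF norm_ge_zero lam _ ee1 N1] a ng2 by auto
      also have "(lam powr (e1 - 1/a) * I) powr (1 / enn2real p1) = B2"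
      proof -
        have ex: "(e1 - 1/a) / e1 = 1 - 1/(e1*a)" using e1 a by (simp add: field_simps)
        show ?thesis unfolding B2_def p1e(3) using e1 lam I a p1e
          by (simp add: powr_mult powr_powr ex)
      qed
      finally show ?thesis .
    qed
    have B12: "B1 > 0" "B2 > 0" unfolding B1_def B2_def using lam I by auto
    have W1: "weak_norm (T g1) q0 \<le> ennreal (K0 * B1)"
    proof -
      have "weak_norm (T g1) q0 \<le> ennreal K0 * Lp_norm g1 p0" by (rule w0[OF sg1])
      also have "\<dots> \<le> ennreal K0 * ennreal B1" using Lg1 by (rule mult_left_mono) simp
      finally show ?thesis using K B12 by (simp add: ennreal_mult)
    qed
    have W2: "weak_norm (T g2) q1 \<le> ennreal (K1 * B2)"
    proof -
      have "weak_norm (T g2) q1 \<le> ennreal K1 * Lp_norm g2 p1" by (rule w1[OF sg2])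
      also have "\<dots> \<le> ennreal K1 * ennreal B2" using Lg2 by (rule mult_left_mono) simp
      finally show ?thesis using K B12 by (simp add: ennreal_mult)
    qed
    have split: "distrib_fun (T g) (ennreal s) \<le> distrib_fun (T g1) (ennreal (s/2)) + distrib_fun (T g2) (ennreal (s/2))"
    proof -
      have "\<forall>f g. schwartz f \<longrightarrow> schwartz g \<longrightarrow>
        (AE x in lebesgue. norm (T (\<lambda>y. f y + g y) x) \<le> norm (T f x) + norm (T g x))"
        using sub unfolding sublinear_op_def by (rule conjunct1)
      hence "AE x in lebesgue. norm (T (\<lambda>y. g1 y + g2 y) x) \<le> norm (T g1 x) + norm (T g2 x)"
        using sg1 sg2 by blast
      hence ae: "AE x in lebesgue. norm (T g x) \<le> norm (T g1 x) + norm (T g2 x)"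
        unfolding gsum .
      have S1: "{x. s/2 < norm (T g1 x)} \<in> sets lebesgue"
      proof -
        have "{x \<in> space lebesgue. s/2 < norm (T g1 x)} \<in> sets lebesgue" using Tm(2) by measurable
        thus ?thesis by simp
      qed
      have S2: "{x. s/2 < norm (T g2 x)} \<in> sets lebesgue"
      proof -
        have "{x \<in> space lebesgue. s/2 < norm (T g2 x)} \<in> sets lebesgue" using Tm(3) by measurable
        thus ?thesis by simp
      qed
      have "emeasure lebesgue {x. s < norm (T g x)}
          \<le> emeasure lebesgue ({x. s/2 < norm (T g1 x)} \<union> {x. s/2 < norm (T g2 x)})"
      proof (rule emeasure_mono_AE)
        show "AE x in lebesgue. x \<in> {x. s < norm (T g x)} \<longrightarrow> x \<in> {x. s/2 < norm (T g1 x)} \<union> {x. s/2 < norm (T g2 x)}"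
          using ae by eventually_elim auto
        show "{x. s/2 < norm (T g1 x)} \<union> {x. s/2 < norm (T g2 x)} \<in> sets lebesgue" using S1 S2 by auto
      qed
      also have "\<dots> \<le> emeasure lebesgue {x. s/2 < norm (T g1 x)} + emeasure lebesgue {x. s/2 < norm (T g2 x)}"
        by (rule emeasure_subadditive[OF S1 S2])
      finally show ?thesis using s by (simp add: distrib_real)
    qed
    have s2: "s/2 > 0" using s by simp
    have d1: "distrib_fun (T g1) (ennreal (s/2)) \<le> ennreal ((K0 * B1 / (s/2)) powr (1/b0))"
    proof -
      have "b0 > 0" using b0 mu by simp
      moreover have "0 \<le> K0 * B1" using K B12 by simp
      ultimately show ?thesis using weak_distrib_pos[OF Tm(2) W1 bq(1)[symmetric] _ s2] by simp
    qed
    have X1: "K0 * B1 / (s/2) = 2*K0*B1/s" by simp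
    have f1: "(K0 * B1 / (s/2)) powr (1/b0) \<le> 2 powr (1/\<mu>) * u powr (1/b)"
      unfolding X1 by (rule fr1[OF cr(4) cr(6) cr(2) b b0 mu(3) th])
    have d2: "distrib_fun (T g2) (ennreal (s/2)) \<le> ennreal (u powr (1/b))"
    proof (cases "b1 = 0")
      case True
      have "2*K1*B2/s < 1" using fr3[OF cr(5) cr(3)[unfolded True] th(2)] .
      hence "K1 * B2 < s/2" using s by (simp add: field_simps)
      hence "distrib_fun (T g2) (ennreal (s/2)) = 0"
      proof -
        have r0: "recip q1 = 0" using bq(2) True by simp
        have "0 \<le> K1 * B2" using K B12 by simp
        thus ?thesis using weak_distrib_zero[OF Tm(3) W2 r0 \<open>K1 * B2 < s/2\<close>] by simp
      qed
      thus ?thesis by simp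
    next
      case False
      hence b1: "b1 > 0" using bq by simp
      have A: "distrib_fun (T g2) (ennreal (s/2)) \<le> ennreal ((K1 * B2 / (s/2)) powr (1/b1))"
      proof -
        have "0 \<le> K1 * B2" using K B12 by simp
        thus ?thesis using weak_distrib_pos[OF Tm(3) W2 bq(2)[symmetric] b1 s2] by simp
      qed
      have B: "(K1 * B2 / (s/2)) powr (1/b1) \<le> u powr (1/b)"
      proof -
        have "K1 * B2 / (s/2) = 2*K1*B2/s" by simp
        thus ?thesis using fr2[OF cr(5) cr(6) cr(3) b b1 th(2)] by metis
      qed
      show ?thesis using A ennreal_leI[OF B] by (rule order_trans)
    qed
    have "distrib_fun (T g) (ennreal s) \<le> ennreal (2 powr (1/\<mu>) * u powr (1/b)) + ennreal (u powr (1/b))"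
    proof -
      have "distrib_fun (T g1) (ennreal (s/2)) \<le> ennreal (2 powr (1/\<mu>) * u powr (1/b))"
        using d1 ennreal_leI[OF f1] by (rule order_trans)
      hence "distrib_fun (T g1) (ennreal (s/2)) + distrib_fun (T g2) (ennreal (s/2))
          \<le> ennreal (2 powr (1/\<mu>) * u powr (1/b)) + ennreal (u powr (1/b))"
        using d2 by (rule add_mono)
      thus ?thesis using split by (rule order_trans[rotated])
    qed
    also have "\<dots> = ennreal (2 powr (1/\<mu>) * u powr (1/b) + u powr (1/b))" by (simp add: ennreal_plus)
    also have "\<dots> \<le> ennreal ((4 powr (1 + 1/\<mu>) * u) powr (1/b))"
      using fr4[OF b bb(2) mu(3) cr(6)] by (rule ennreal_leI)
    also have "4 powr (1 + 1/\<mu>) * u = M / s" unfolding M_def C_def u_def by (simp add: field_simps)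
    finally show "distrib_fun (T g) (ennreal s) \<le> ennreal ((M / s) powr (1 / b))" .
  qed
qed



theorem mainTheorem16:
  fixes p0 p1 q0 q1 :: ennreal and \<mu> :: real
  assumes "1/2 < p0" "p0 < p1" "1/2 \<le> q0" "1/2 \<le> q1"
    and "recip p0 - recip p1 = \<mu>" "recip q0 - recip q1 = \<mu>" "\<mu> > 0"
  shows "\<exists>C::real. C > 0 \<and>
    (\<forall>(T :: (real \<Rightarrow> complex) \<Rightarrow> (real \<Rightarrow> complex)) (K0::real) (K1::real).
       sublinear_op T \<longrightarrow>
       (\<forall>g. schwartz g \<longrightarrow> locally_integrable (T g)) \<longrightarrow>
       K0 \<ge> 0 \<longrightarrow> K1 \<ge> 0 \<longrightarrow>
       (\<forall>g. schwartz g \<longrightarrow> weak_norm (T g) q0 \<le> ennreal K0 * Lp_norm g p0) \<longrightarrow>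
       (\<forall>g. schwartz g \<longrightarrow> weak_norm (T g) q1 \<le> ennreal K1 * Lp_norm g p1) \<longrightarrow>
       (\<forall>\<theta>::real. 0 < \<theta> \<longrightarrow> \<theta> < 1 \<longrightarrow>
          (\<forall>g. schwartz g \<longrightarrow>
             weak_norm (T g) (inverse (ennreal ((1 - \<theta>) * recip q0 + \<theta> * recip q1)))
               \<le> ennreal (C * K0 powr (1 - \<theta>) * K1 powr \<theta>)
                  * Lp_norm g (inverse (ennreal ((1 - \<theta>) * recip p0 + \<theta> * recip p1))))))"
proof -
  have "p0 < top" using assms(2) top.not_eq_extremum by fastforce
  then obtain e0 where p0e: "p0 = ennreal e0" "e0 \<ge> 0" by (cases p0) auto
  have e0h: "e0 \<ge> 1/2" using half_le assms(1) p0e by simp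
  hence e0: "e0 > 0" by simp
  have a0: "recip p0 = 1/e0" using p0e e0 recip_fin by simp
  have p1c: "(p1 = top \<and> recip p1 = 0) \<or> (\<exists>e1. p1 = ennreal e1 \<and> e1 > e0 \<and> recip p1 = 1/e1)"
  proof (cases p1)
    case (real e1)
    have "e0 < e1" using assms(2) real p0e by (simp add: ennreal_less_iff)
    thus ?thesis using real e0 recip_fin[of e1] by auto
  qed (simp add: recip_top)
  have b0: "recip q0 \<le> 2" by (rule recip_le2[OF assms(3)])
  define C :: real where "C = 2 * 4 powr (1 + 1/\<mu>)"
  have C: "C > 0" unfolding C_def by simp
  show ?thesis
  proof (rule exI[of _ C], intro conjI allI impI C)
    fix T :: "(real \<Rightarrow> complex) \<Rightarrow> (real \<Rightarrow> complex)" and K0 K1 \<theta> :: real and g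
    assume sub: "sublinear_op T" and li: "\<forall>g. schwartz g \<longrightarrow> locally_integrable (T g)"
      and K: "K0 \<ge> 0" "K1 \<ge> 0"
      and w0: "\<forall>g. schwartz g \<longrightarrow> weak_norm (T g) q0 \<le> ennreal K0 * Lp_norm g p0"
      and w1: "\<forall>g. schwartz g \<longrightarrow> weak_norm (T g) q1 \<le> ennreal K1 * Lp_norm g p1"
      and th: "0 < \<theta>" "\<theta> < 1" and g: "schwartz g"
    define a where "a = (1 - \<theta>) * recip p0 + \<theta> * recip p1"
    define b where "b = (1 - \<theta>) * recip q0 + \<theta> * recip q1"
    have a1: "recip p1 \<ge> 0" by (rule recip_ge)
    have a: "a > 0" unfolding a_def using th a1 a0 e0
      by (smt (verit) divide_pos_pos mult_nonneg_nonneg mult_pos_pos)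
    have gm: "g \<in> borel_measurable lebesgue" by (rule schwartz_meas[OF g])
    show "weak_norm (T g) (inverse (ennreal b)) \<le> ennreal (C * K0 powr (1 - \<theta>) * K1 powr \<theta>) * Lp_norm g (inverse (ennreal a))"
    proof (cases "K0 = 0 \<or> K1 = 0")
      case True
      have "weak_norm (T g) (inverse (ennreal b)) = 0"
      proof (cases "K0 = 0")
        case True
        hence "weak_norm (T g) q0 \<le> 0" using w0 g by auto
        thus ?thesis by (rule weak_zero)
      next
        case False
        hence "K1 = 0" using \<open>K0 = 0 \<or> K1 = 0\<close> by simp
        hence "weak_norm (T g) q1 \<le> 0" using w1 g by auto
        thus ?thesis by (rule weak_zero)
      qed
      thus ?thesis by simp
    next
      case False
      hence Kp: "K0 > 0" "K1 > 0" using K by auto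
      define J where "J = (\<integral>\<^sup>+ x. ennreal (norm (g x) powr (1/a)) \<partial>lebesgue)"
      have pa: "inverse (ennreal a) \<noteq> top" "enn2real (inverse (ennreal a)) = 1/a"
        using a inv_enn[OF a] e2r_inv[OF a] by auto
      have pa'': "inverse (ennreal a) \<noteq> \<infinity>" using pa(1) by simp
      show ?thesis
      proof (cases "J = 0")
        case True
        have "Lp_norm g p0 = 0"
          by (rule Lp_zero[OF _ gm _ True[unfolded J_def]]) (use p0e a in auto)
        hence "weak_norm (T g) q0 \<le> 0" using w0 g by auto
        hence "weak_norm (T g) (inverse (ennreal b)) = 0" by (rule weak_zero)
        thus ?thesis by simp
      next
        case J0: False
        show ?thesis
        proof (cases "J = top")
          case True
          have "Lp_norm g (inverse (ennreal a)) = top"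
            unfolding Lp_norm_def using pa True unfolding J_def by (simp add: Let_def)
          moreover have "ennreal (C * K0 powr (1 - \<theta>) * K1 powr \<theta>) \<noteq> 0" using C Kp by simp
          ultimately show ?thesis by (simp add: ennreal_mult_top)
        next
          case False
          then obtain I where I: "J = ennreal I" "I \<ge> 0" by (cases J) auto
          have Ip: "I > 0" using I J0 by (cases "I = 0") auto
          have Lg: "Lp_norm g (inverse (ennreal a)) = ennreal (I powr a)"
            using Lp_fin_eq[OF pa'' _ I(2), of g] I(1) pa(2) unfolding J_def by simp
          obtain e1 where p1e: "(p1 = top \<and> recip p1 = 0) \<or> (p1 = ennreal e1 \<and> e1 > e0 \<and> recip p1 = 1/e1)"
            using p1c by blast
          have core: "weak_norm (T g) (inverse (ennreal b))
             \<le> ennreal (2 * 4 powr (1 + 1/\<mu>) * K0 powr (1-\<theta>) * K1 powr \<theta> * I powr a)"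
          proof (rule core_case[OF e0 p0e(1) a0 p1e refl refl recip_ge b0 assms(5,6,7) sub _ Kp _ _ th g a_def b_def Ip])
            show "\<And>g. schwartz g \<Longrightarrow> locally_integrable (T g)" using li by auto
            show "\<And>g. schwartz g \<Longrightarrow> weak_norm (T g) q0 \<le> ennreal K0 * Lp_norm g p0" using w0 by auto
            show "\<And>g. schwartz g \<Longrightarrow> weak_norm (T g) q1 \<le> ennreal K1 * Lp_norm g p1" using w1 by auto
            show "(\<integral>\<^sup>+ x. ennreal (norm (g x) powr (1/a)) \<partial>lebesgue) = ennreal I" using I J_def by simp
          qed
          also have "\<dots> = ennreal (C * K0 powr (1 - \<theta>) * K1 powr \<theta>) * ennreal (I powr a)"
            unfolding C_def using Kp by (simp add: ennreal_mult[symmetric] mult.assoc)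
          finally show ?thesis unfolding Lg .
        qed
      qed
    qed
  qed
qed

end
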